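(* For every language $L=\mathrm{LLin}_\ell(\pi,\sigma,\alpha,\theta)$ there exist $\alpha'\colon\Sigma^\ell\to\mathbb R_{\ge0}$ and $\theta'$ such that $L=\mathrm{LLin}_\ell(\pi,\sigma,\alpha',\theta')$ and: (1) $\theta'=1$; (2) there is a constant $\varepsilon>0$ such that for every $w\in\Sigma^*$, either $f'(w)<1-\varepsilon$ or $f'(w)>1+\varepsilon$, where $f'(w)=\sum_{m\in\Sigma^\ell}\alpha'(m)\,|w|_m$; (3) there is $k\in\mathbb N_0$ such that for every $m\in\Sigma^\ell$ there is $n\in\{0,1,\dots,2^k-1\}$ with $\alpha'(m)=k-\log_2(n+1)$.
   Context: $\Sigma$ is a finite alphabet. For a word $w$ and $\ell\in\mathbb N_0$, $p_\ell(w)$ (resp. $s_\ell(w)$) is the prefix (resp. suffix) of $w$ of length $\ell$ if $|w|\ge\ell$ and $w$ otherwise; $|w|_m$ is the number of occurrences of $m$ as an infix of $w$. For $\ell\in\mathbb N_0$, $\theta\in\mathbb R_{\ge0}$, $\pi,\sigma\subseteq\Sigma^{\le\ell-1}$ and $\alpha\colon\Sigma^\ell\to\mathbb R_{\ge0}$, $\mathrm{LLin}_\ell(\pi,\sigma,\alpha,\theta)$ is the set of $w\in\Sigma^+$ with $p_{\ell-1}(w)\in\pi$, $s_{\ell-1}(w)\in\sigma$ and $\sum_{m\in\Sigma^\ell}\alpha(m)|w|_m\le\theta$. *)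

theory Defs
  imports Complex_Main
begin

definition pre :: "nat \<Rightarrow> 'a list \<Rightarrow> 'a list" where
  "pre l w = take l w"

definition suf :: "nat \<Rightarrow> 'a list \<Rightarrow> 'a list" where
  "suf l w = drop (length w - l) w"

definition occ :: "'a list \<Rightarrow> 'a list \<Rightarrow> nat" where
  "occ m w = card {i. i + length m \<le> length w \<and> take (length m) (drop i w) = m}"

definition words_of_len :: "nat \<Rightarrow> 'a list set" where
  "words_of_len l = {m. length m = l}"

definition wsum :: "nat \<Rightarrow> ('a list \<Rightarrow> real) \<Rightarrow> 'a list \<Rightarrow> real" where
  "wsum l \<alpha> w = (\<Sum>m\<in>words_of_len l. \<alpha> m * real (occ m w))"

definition LLin :: "nat \<Rightarrow> 'a list set \<Rightarrow> 'a list set \<Rightarrow> ('a list \<Rightarrow> real) \<Rightarrow> real \<Rightarrow> 'a list set" where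
  "LLin l \<pi> \<sigma> \<alpha> \<theta> = {w. w \<noteq> [] \<and> pre (l - 1) w \<in> \<pi> \<and> suf (l - 1) w \<in> \<sigma> \<and> wsum l \<alpha> w \<le> \<theta>}"

end

theory Submission
  imports Defs "HOL-Library.FuncSet"
begin

lemma approx_val:
  fixes k :: nat and x :: real
  assumes x0: "0 \<le> x" and xk: "x \<le> real k"
  defines "A \<equiv> real k - log 2 (real_of_int \<lceil>2 powr (real k - x)\<rceil>)"
  shows "A \<le> x" "\<exists>n::nat. n < 2 ^ k \<and> A = real k - log 2 (real n + 1)"
    "\<And>\<eta>. 2 powr (real k - x) * (2 powr (\<eta> * x) - 1) \<ge> 1 \<Longrightarrow> A \<ge> x - \<eta> * x"
proof -
  let ?y = "2 powr (real k - x)"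
  let ?c = "real_of_int \<lceil>?y\<rceil>"
  have ypos: "?y > 0" by simp
  have cge: "?c \<ge> ?y" by (simp add: le_of_int_ceiling)
  have cpos: "?c > 0" using ypos cge by linarith
  have "log 2 ?c \<ge> log 2 ?y" using cge ypos by (intro log_mono) auto
  moreover have "log 2 ?y = real k - x" by (simp add: log_powr_cancel)
  ultimately show "A \<le> x" unfolding A_def by linarith
  have yle: "?y \<le> 2 ^ k" using x0
  proof -
    have "?y \<le> 2 powr (real k)" using x0 by (intro powr_mono) auto
    also have "\<dots> = 2 ^ k" by (simp add: powr_realpow)
    finally show ?thesis .
  qed
  have "\<lceil>?y\<rceil> \<le> 2 ^ k"
    using yle by (simp add: ceiling_le_iff)
  moreover have "\<lceil>?y\<rceil> \<ge> 1" using ypos by (simp add: ceiling_le_iff)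
  ultimately have "nat \<lceil>?y\<rceil> - 1 < 2 ^ k \<and> real (nat \<lceil>?y\<rceil> - 1) + 1 = ?c"
  proof -
    assume a: "\<lceil>?y\<rceil> \<le> 2 ^ k" "\<lceil>?y\<rceil> \<ge> 1"
    obtain j :: nat where j: "\<lceil>?y\<rceil> = int j" using a(2) by (metis nonneg_int_cases zero_le_one order_trans)
    have "j \<ge> 1" "j \<le> 2 ^ k" using a j by auto
    then show ?thesis using j by (auto simp: of_nat_diff)
  qed
  then show "\<exists>n::nat. n < 2 ^ k \<and> A = real k - log 2 (real n + 1)"
    unfolding A_def by metis
  fix \<eta> :: real
  assume h: "2 powr (real k - x) * (2 powr (\<eta> * x) - 1) \<ge> 1"
  have "?c \<le> ?y + 1" by linarith
  also have "\<dots> \<le> ?y * 2 powr (\<eta> * x)" using h by (simp add: algebra_simps)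
  also have "\<dots> = 2 powr (real k - x + \<eta> * x)" by (simp add: powr_add)
  finally have "log 2 ?c \<le> real k - x + \<eta> * x"
    using cpos by (simp add: log_le_iff le_log_iff)
  then show "A \<ge> x - \<eta> * x" unfolding A_def by linarith
qed

lemma gap_lemma:
  fixes W :: "'b set" and \<alpha> :: "'b \<Rightarrow> real" and \<theta> :: real
  assumes fin: "finite W" and nn: "\<forall>m\<in>W. \<alpha> m \<ge> 0" and th0: "\<theta> \<ge> 0"
  shows "\<exists>\<delta>>0. \<forall>c::'b\<Rightarrow>nat. (\<Sum>m\<in>W. \<alpha> m * real (c m)) \<le> \<theta> \<or> (\<Sum>m\<in>W. \<alpha> m * real (c m)) \<ge> \<theta> + \<delta>"
proof (cases "{m\<in>W. \<alpha> m > 0} = {}")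
  case True
  then have "\<And>c::'b\<Rightarrow>nat. (\<Sum>m\<in>W. \<alpha> m * real (c m)) = 0"
  proof (intro sum.neutral ballI)
    fix c :: "'b \<Rightarrow> nat" and m assume "m \<in> W"
    then have "\<alpha> m = 0" using nn True by force
    then show "\<alpha> m * real (c m) = 0" by simp
  qed
  then show ?thesis
    using assms by (intro exI[of _ 1]) auto
next
  case False
  define P where "P = {m\<in>W. \<alpha> m > 0}"
  have finP: "finite P" using fin unfolding P_def by simp
  define a where "a = Min (\<alpha> ` P)"
  have apos: "a > 0" unfolding a_def using False finP by (simp add: P_def)
  have ale: "\<And>m. m \<in> P \<Longrightarrow> a \<le> \<alpha> m" unfolding a_def using finP by simp
  define K where "K = nat \<lceil>(\<theta> + 1) / a\<rceil>"
  define g where "g = (\<lambda>d::'b\<Rightarrow>nat. \<Sum>m\<in>W. \<alpha> m * real (d m))"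
  define S where "S = g ` (PiE W (\<lambda>_. {0..K}))"
  have finS: "finite S" unfolding S_def using fin by (intro finite_imageI finite_PiE) auto
  define T where "T = {v\<in>S. v > \<theta>}"
  have finT: "finite T" using finS unfolding T_def by simp
  define \<delta> where "\<delta> = (if T = {} then 1 else min 1 (Min T - \<theta>))"
  have dpos: "\<delta> > 0" unfolding \<delta>_def using finT by (auto simp: T_def)
  have dle: "\<delta> \<le> 1" unfolding \<delta>_def by auto
  have "\<forall>c::'b\<Rightarrow>nat. g c \<le> \<theta> \<or> g c \<ge> \<theta> + \<delta>"
  proof
    fix c :: "'b \<Rightarrow> nat"
    define d where "d = restrict (\<lambda>m. if \<alpha> m > 0 then c m else 0) W"
    have gd: "g c = g d" unfolding g_def d_def
      using nn by (intro sum.cong) auto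
    show "g c \<le> \<theta> \<or> g c \<ge> \<theta> + \<delta>"
    proof (cases "g c \<le> \<theta>")
      case True then show ?thesis by simp
    next
      case gt: False
      show ?thesis
      proof (cases "g c > \<theta> + 1")
        case True then show ?thesis using dle by simp
      next
        case False
        have "d \<in> PiE W (\<lambda>_. {0..K})"
        proof -
          have "d m \<le> K" if m: "m \<in> W" for m
          proof (cases "\<alpha> m > 0")
            case True
            have "\<alpha> m * real (c m) \<le> g c" unfolding g_def
              using m fin nn by (intro member_le_sum[where f="\<lambda>m. \<alpha> m * real (c m)"]) auto
            then have "\<alpha> m * real (c m) \<le> \<theta> + 1" using False by simp
            moreover have "a * real (c m) \<le> \<alpha> m * real (c m)"
              using ale[of m] m True by (intro mult_right_mono) (auto simp: P_def)
            ultimately have "a * real (c m) \<le> \<theta> + 1" by simp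
            then have "real (c m) \<le> (\<theta> + 1) / a" using apos by (simp add: field_simps)
            then have "c m \<le> K" unfolding K_def by linarith
            then show ?thesis using m True by (simp add: d_def)
          qed (simp add: d_def m)
          then show ?thesis unfolding d_def by (auto simp: PiE_def extensional_def)
        qed
        then have "g c \<in> T" unfolding T_def S_def using gd gt by auto
        then have "Min T \<le> g c" using finT by simp
        then have "\<theta> + \<delta> \<le> g c" unfolding \<delta>_def using \<open>g c \<in> T\<close> by auto
        then show ?thesis by simp
      qed
    qed
  qed
  then show ?thesis using dpos unfolding g_def by blast
qed


theorem mainTheorem10:
  fixes l :: nat and \<pi> \<sigma> :: "('a::finite) list set"
    and \<alpha> :: "'a list \<Rightarrow> real" and \<theta> :: real
  assumes "\<pi> \<subseteq> {u. length u < l}" and "\<sigma> \<subseteq> {u. length u < l}"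
    and "\<forall>m\<in>words_of_len l. \<alpha> m \<ge> 0" and "\<theta> \<ge> 0"
  shows "\<exists>\<alpha>' \<theta>'. (\<forall>m\<in>words_of_len l. \<alpha>' m \<ge> 0)
           \<and> LLin l \<pi> \<sigma> \<alpha> \<theta> = LLin l \<pi> \<sigma> \<alpha>' \<theta>'
           \<and> \<theta>' = 1
           \<and> (\<exists>\<epsilon>>0. \<forall>w::'a list. wsum l \<alpha>' w < 1 - \<epsilon> \<or> wsum l \<alpha>' w > 1 + \<epsilon>)
           \<and> (\<exists>k::nat. \<forall>m\<in>words_of_len l. \<exists>n::nat. n < 2 ^ k \<and> \<alpha>' m = real k - log 2 (real n + 1))"
proof -
  define W where "W = (words_of_len l :: 'a list set)"
  have finW: "finite W"
  proof -
    have "W = {xs. set xs \<subseteq> (UNIV::'a set) \<and> length xs = l}" by (simp add: W_def words_of_len_def)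
    then show ?thesis using finite_lists_length_eq[of "UNIV::'a set" l] by simp
  qed
  have nn: "\<forall>m\<in>W. \<alpha> m \<ge> 0" using assms(3) W_def by simp
  obtain \<delta> where dpos: "\<delta> > 0" and gapc: "\<forall>c::'a list\<Rightarrow>nat. (\<Sum>m\<in>W. \<alpha> m * real (c m)) \<le> \<theta> \<or> (\<Sum>m\<in>W. \<alpha> m * real (c m)) \<ge> \<theta> + \<delta>"
    using gap_lemma[OF finW nn assms(4)] by blast
  have wsW: "\<And>f w. wsum l f w = (\<Sum>m\<in>W. f m * real (occ m w))" by (simp add: wsum_def W_def)
  have gapw: "\<And>w. wsum l \<alpha> w \<le> \<theta> \<or> wsum l \<alpha> w \<ge> \<theta> + \<delta>"
    using gapc wsW by (metis (no_types))
  define \<theta>2 where "\<theta>2 = \<theta> + \<delta> / 2"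
  have t2pos: "\<theta>2 > 0" using dpos assms(4) by (simp add: \<theta>2_def)
  define \<beta> where "\<beta> m = \<alpha> m / \<theta>2" for m
  define \<gamma> where "\<gamma> = (\<delta> / 2) / \<theta>2"
  have gpos: "\<gamma> > 0" using dpos t2pos by (simp add: \<gamma>_def)
  have bnn: "\<forall>m\<in>W. \<beta> m \<ge> 0" using nn t2pos by (simp add: \<beta>_def)
  have wsb: "wsum l \<beta> w = wsum l \<alpha> w / \<theta>2" for w
    unfolding wsW \<beta>_def by (simp add: sum_divide_distrib)
  have F: "(wsum l \<beta> w \<le> 1 - \<gamma> \<and> wsum l \<alpha> w \<le> \<theta>) \<or> (wsum l \<beta> w \<ge> 1 + \<gamma> \<and> wsum l \<alpha> w > \<theta>)" for w
  proof (cases "wsum l \<alpha> w \<le> \<theta>")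
    case True
    then have "wsum l \<alpha> w / \<theta>2 \<le> \<theta> / \<theta>2" using t2pos by (simp add: divide_right_mono)
    also have "\<theta> / \<theta>2 = 1 - \<gamma>" using t2pos by (simp add: \<gamma>_def \<theta>2_def field_simps)
    finally show ?thesis using True wsb by simp
  next
    case False
    then have h: "wsum l \<alpha> w \<ge> \<theta> + \<delta>" using gapw by blast
    then have "wsum l \<alpha> w / \<theta>2 \<ge> (\<theta> + \<delta>) / \<theta>2" using t2pos by (simp add: divide_right_mono)
    moreover have "(\<theta> + \<delta>) / \<theta>2 = 1 + \<gamma>" using t2pos by (simp add: \<gamma>_def \<theta>2_def field_simps)
    ultimately show ?thesis using False wsb by simp
  qed
  define \<eta> where "\<eta> = \<gamma> / (2 * (1 + \<gamma>))"
  have etapos: "\<eta> > 0" using gpos by (simp add: \<eta>_def)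
  have etalt: "\<eta> < 1" using gpos by (simp add: \<eta>_def field_simps)
  define B where "B = Max (insert 0 (\<beta> ` W))"
  have Bge: "\<And>m. m \<in> W \<Longrightarrow> \<beta> m \<le> B" unfolding B_def using finW by simp
  have B0: "B \<ge> 0" unfolding B_def using finW by simp
  define b where "b = Min (insert 1 (\<beta> ` {m\<in>W. \<beta> m > 0}))"
  have bpos: "b > 0" unfolding b_def using finW by simp
  have ble: "\<And>m. m \<in> W \<Longrightarrow> \<beta> m > 0 \<Longrightarrow> b \<le> \<beta> m" unfolding b_def using finW by simp
  define c0 where "c0 = 2 powr (\<eta> * b) - 1"
  have c0pos: "c0 > 0" unfolding c0_def using etapos bpos by simp
  obtain k0 :: nat where k0: "1 / c0 < 2 ^ k0" using real_arch_pow[of 2 "1/c0"] by auto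
  define k where "k = k0 + nat \<lceil>B\<rceil>"
  have Bk: "B \<le> real k" unfolding k_def by linarith
  define \<alpha>' where "\<alpha>' m = real k - log 2 (real_of_int \<lceil>2 powr (real k - \<beta> m)\<rceil>)" for m
  have props: "\<alpha>' m \<le> \<beta> m \<and> \<alpha>' m \<ge> (1 - \<eta>) * \<beta> m \<and> \<alpha>' m \<ge> 0 \<and>
       (\<exists>n::nat. n < 2 ^ k \<and> \<alpha>' m = real k - log 2 (real n + 1))" if m: "m \<in> W" for m
  proof -
    have x0: "0 \<le> \<beta> m" using bnn m by simp
    have xk: "\<beta> m \<le> real k" using Bge[OF m] Bk by simp
    note A = approx_val[OF x0 xk]
    have le: "\<alpha>' m \<le> \<beta> m" using A(1) by (simp add: \<alpha>'_def)
    obtain n :: nat where n: "n < 2 ^ k" "\<alpha>' m = real k - log 2 (real n + 1)"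
      using A(2) by (auto simp: \<alpha>'_def)
    have "log 2 (real n + 1) \<le> log 2 (2 ^ k)"
    proof (rule log_mono)
      have "n + 1 \<le> (2::nat) ^ k" using n(1) by simp
      then have "real (n + 1) \<le> real ((2::nat) ^ k)" by (rule of_nat_mono)
      then show "real n + 1 \<le> 2 ^ k" by simp
    qed auto
    then have ge0: "\<alpha>' m \<ge> 0" using n(2) by (simp add: log_nat_power)
    have low: "\<alpha>' m \<ge> (1 - \<eta>) * \<beta> m"
    proof (cases "\<beta> m > 0")
      case False then have "\<beta> m = 0" using x0 by simp
      then show ?thesis using ge0 by simp
    next
      case True
      have bb: "b \<le> \<beta> m" using ble[OF m True] .
      have "2 powr (real k - \<beta> m) \<ge> 2 powr (real k0)"
        using Bge[OF m] unfolding k_def by (intro powr_mono) linarith+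
      then have p1: "2 powr (real k - \<beta> m) \<ge> 2 ^ k0" by (simp add: powr_realpow)
      have "2 powr (\<eta> * \<beta> m) \<ge> 2 powr (\<eta> * b)"
        using bb etapos by (intro powr_mono) auto
      then have p2: "2 powr (\<eta> * \<beta> m) - 1 \<ge> c0" unfolding c0_def by simp
      have "1 < 2 ^ k0 * c0" using k0 c0pos by (simp add: field_simps)
      also have "\<dots> \<le> 2 powr (real k - \<beta> m) * (2 powr (\<eta> * \<beta> m) - 1)"
        using p1 p2 c0pos by (intro mult_mono) auto
      finally have "\<beta> m - \<eta> * \<beta> m \<le> \<alpha>' m" using A(3)[of \<eta>] by (simp add: \<alpha>'_def)
      then show ?thesis by (simp add: algebra_simps)
    qed
    show ?thesis using le low ge0 n by blast
  qed
  have up: "wsum l \<alpha>' w \<le> wsum l \<beta> w" for w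
    unfolding wsW using props by (intro sum_mono mult_right_mono) auto
  have lo: "(1 - \<eta>) * wsum l \<beta> w \<le> wsum l \<alpha>' w" for w
    unfolding wsW sum_distrib_left using props
    by (intro sum_mono) (auto simp: mult.assoc[symmetric] intro!: mult_right_mono)
  have key: "(1 - \<eta>) * (1 + \<gamma>) = 1 + \<gamma> / 2" using gpos by (simp add: \<eta>_def field_simps)
  have G: "(wsum l \<alpha>' w \<le> 1 - \<gamma> \<and> wsum l \<alpha> w \<le> \<theta>) \<or> (wsum l \<alpha>' w \<ge> 1 + \<gamma> / 2 \<and> wsum l \<alpha> w > \<theta>)" for w
  proof -
    have "(1 - \<eta>) * (1 + \<gamma>) \<le> (1 - \<eta>) * wsum l \<beta> w" if "wsum l \<beta> w \<ge> 1 + \<gamma>"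
      using that etalt by (intro mult_left_mono) auto
    then show ?thesis using F[of w] up[of w] lo[of w] key by force
  qed
  have eqv: "wsum l \<alpha> w \<le> \<theta> \<longleftrightarrow> wsum l \<alpha>' w \<le> 1" for w
    using G[of w] gpos by auto
  have c1: "\<forall>m\<in>words_of_len l. \<alpha>' m \<ge> 0" using props W_def by blast
  have c2: "LLin l \<pi> \<sigma> \<alpha> \<theta> = LLin l \<pi> \<sigma> \<alpha>' 1" unfolding LLin_def using eqv by auto
  have c3: "\<forall>w::'a list. wsum l \<alpha>' w < 1 - \<gamma>/4 \<or> wsum l \<alpha>' w > 1 + \<gamma>/4"
  proof
    fix w :: "'a list" show "wsum l \<alpha>' w < 1 - \<gamma>/4 \<or> wsum l \<alpha>' w > 1 + \<gamma>/4" using G[of w] gpos by auto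
  qed
  have c4: "\<gamma>/4 > 0" using gpos by simp
  have c5: "\<exists>k::nat. \<forall>m\<in>words_of_len l. \<exists>n::nat. n < 2 ^ k \<and> \<alpha>' m = real k - log 2 (real n + 1)"
    using props W_def by blast
  show ?thesis
    apply (rule exI[of _ \<alpha>'])
    apply (rule exI[of _ 1])
    using c1 c2 c3 c4 c5 by blast
qed

end
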